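(* Let $n\le d$, let $V=\operatorname{span}\{|ii\rangle: i\in[n]\}\subseteq\mathbb{C}^d\otimes\mathbb{C}^d$, let $\phi=\sum_{i=1}^n\phi_i|ii\rangle\in V$, and let $K=\sum_{i=1}^n|e_i\rangle\langle ii|$, where $\{e_i\}$ is the standard basis of $\mathbb{C}^n$. If $\rho\in\mathcal{F}_{\phi}$ is separable, then $Z^\Gamma_K(\rho)=K\rho^\Gamma K^*\in\operatorname{R}_1[\mathcal{M}_n^+[x]]$, where $x=(|\phi_1|^2,\dots,|\phi_n|^2)$.
   Context: $|ij\rangle=|i\rangle\otimes|j\rangle$ in the standard basis; $\rho^\Gamma$ is the partial transpose on the second factor. A bipartite PSD $\rho$ is separable if it is a finite sum $\sum_k|v_k\rangle\langle v_k|\otimes|w_k\rangle\langle w_k|$. With $P_V$ the orthogonal projection onto $V$, $\mathcal{F}_\phi=\{\rho\in(\mathcal{M}_d\otimes\mathcal{M}_d)^+ : P_V\rho P_V=\lambda|\phi\rangle\langle\phi| \text{ for some } \lambda\ge0\}$. For $x\in\mathbb{R}^n_+$, $\mathcal{M}_n^+[x]$ is the cone of $n\times n$ complex PSD matrices $X$ for which there exists $\lambda$ with $X_{ii}=\lambda x_i$ for all $i$. For a cone $\mathcal{C}\subseteq\mathcal{M}_n^+$, $\operatorname{R}_1[\mathcal{C}]$ is the convex cone generated by its rank-1 elements. *)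

theory Defs
  imports "HOL-Analysis.Analysis"
begin

text \<open>Conventions: indices are 0-based. An n x n complex matrix is a function
  nat => nat => complex, only entries with indices < n matter. A matrix on
  C^d (x) C^d is a function indexed by pairs (i,j) with i,j < d, where (i,j)
  stands for the basis vector |ij> = |i> (x) |j>.\<close>

definition bi_idx :: "nat \<Rightarrow> (nat \<times> nat) set" where
  "bi_idx d = {0..<d} \<times> {0..<d}"

definition psd_on :: "'i set \<Rightarrow> ('i \<Rightarrow> 'i \<Rightarrow> complex) \<Rightarrow> bool" where
  "psd_on I A \<longleftrightarrow>
     (\<forall>a\<in>I. \<forall>b\<in>I. A b a = cnj (A a b)) \<and>
     (\<forall>v :: 'i \<Rightarrow> complex. 0 \<le> Re (\<Sum>a\<in>I. \<Sum>b\<in>I. cnj (v a) * A a b * v b))"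

definition mmult_on :: "'i set \<Rightarrow> ('i \<Rightarrow> 'i \<Rightarrow> complex) \<Rightarrow> ('i \<Rightarrow> 'i \<Rightarrow> complex)
    \<Rightarrow> ('i \<Rightarrow> 'i \<Rightarrow> complex)" where
  "mmult_on I A B = (\<lambda>a c. \<Sum>b\<in>I. A a b * B b c)"

definition separable :: "nat \<Rightarrow> (nat \<times> nat \<Rightarrow> nat \<times> nat \<Rightarrow> complex) \<Rightarrow> bool" where
  "separable d \<rho> \<longleftrightarrow> psd_on (bi_idx d) \<rho> \<and>
     (\<exists>(m::nat) (v :: nat \<Rightarrow> nat \<Rightarrow> complex) (w :: nat \<Rightarrow> nat \<Rightarrow> complex).
        \<forall>i<d. \<forall>j<d. \<forall>k<d. \<forall>l<d.
          \<rho> (i,j) (k,l) = (\<Sum>t<m. v t i * cnj (v t k) * w t j * cnj (w t l)))"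

text \<open>Orthogonal projection onto V = span{|ii> : i < n} (an orthonormal set).\<close>
definition projV :: "nat \<Rightarrow> (nat \<times> nat \<Rightarrow> nat \<times> nat \<Rightarrow> complex)" where
  "projV n = (\<lambda>(i,j) (k,l). if i = j \<and> k = l \<and> i = k \<and> i < n then 1 else 0)"

definition phi_vec :: "nat \<Rightarrow> (nat \<Rightarrow> complex) \<Rightarrow> (nat \<times> nat \<Rightarrow> complex)" where
  "phi_vec n \<phi> = (\<lambda>(i,j). if i = j \<and> i < n then \<phi> i else 0)"

definition F_phi :: "nat \<Rightarrow> nat \<Rightarrow> (nat \<Rightarrow> complex) \<Rightarrow> (nat \<times> nat \<Rightarrow> nat \<times> nat \<Rightarrow> complex) set" where
  "F_phi d n \<phi> = {\<rho>. psd_on (bi_idx d) \<rho> \<and>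
     (\<exists>lam::real. lam \<ge> 0 \<and> (\<forall>a\<in>bi_idx d. \<forall>b\<in>bi_idx d.
        mmult_on (bi_idx d) (mmult_on (bi_idx d) (projV n) \<rho>) (projV n) a b
          = of_real lam * phi_vec n \<phi> a * cnj (phi_vec n \<phi> b)))}"

definition ptrans :: "(nat \<times> nat \<Rightarrow> nat \<times> nat \<Rightarrow> complex) \<Rightarrow> (nat \<times> nat \<Rightarrow> nat \<times> nat \<Rightarrow> complex)" where
  "ptrans \<rho> = (\<lambda>(i,j) (k,l). \<rho> (i,l) (k,j))"

definition Kmat :: "nat \<Rightarrow> nat \<Rightarrow> nat \<times> nat \<Rightarrow> complex" where
  "Kmat n = (\<lambda>e (i,j). if i = j \<and> i = e \<and> e < n then 1 else 0)"

definition ZK :: "nat \<Rightarrow> nat \<Rightarrow> (nat \<times> nat \<Rightarrow> nat \<times> nat \<Rightarrow> complex) \<Rightarrow> (nat \<Rightarrow> nat \<Rightarrow> complex)" where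
  "ZK d n \<rho> = (\<lambda>e f. \<Sum>a\<in>bi_idx d. \<Sum>b\<in>bi_idx d.
      Kmat n e a * ptrans \<rho> a b * cnj (Kmat n f b))"

definition Mplus_x :: "nat \<Rightarrow> (nat \<Rightarrow> real) \<Rightarrow> (nat \<Rightarrow> nat \<Rightarrow> complex) set" where
  "Mplus_x n x = {X. psd_on {0..<n} X \<and>
     (\<exists>lam::real. \<forall>i<n. X i i = of_real (lam * x i))}"

definition rank1 :: "nat \<Rightarrow> (nat \<Rightarrow> nat \<Rightarrow> complex) \<Rightarrow> bool" where
  "rank1 n X \<longleftrightarrow> (\<exists>u v :: nat \<Rightarrow> complex. (\<exists>i<n. u i \<noteq> 0) \<and> (\<exists>j<n. v j \<noteq> 0) \<and>
     (\<forall>i<n. \<forall>j<n. X i j = u i * cnj (v j)))"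

text \<open>R_1[C]: convex cone generated by the rank-1 elements of C (finite
  nonnegative combinations; the empty combination gives 0).\<close>
definition R1 :: "nat \<Rightarrow> (nat \<Rightarrow> nat \<Rightarrow> complex) set \<Rightarrow> (nat \<Rightarrow> nat \<Rightarrow> complex) set" where
  "R1 n C = {X. \<exists>(m::nat) (c :: nat \<Rightarrow> real) (Y :: nat \<Rightarrow> nat \<Rightarrow> nat \<Rightarrow> complex).
     (\<forall>t<m. c t \<ge> 0 \<and> Y t \<in> C \<and> rank1 n (Y t)) \<and>
     (\<forall>i<n. \<forall>j<n. X i j = (\<Sum>t<m. of_real (c t) * Y t i j))}"

end

theory Submission imports Defs begin

lemma par_key:
  fixes z :: "nat \<Rightarrow> nat \<Rightarrow> complex" and \<phi> :: "nat \<Rightarrow> complex"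
  assumes H: "\<forall>i<n. \<forall>k<n. (\<Sum>t<m. z t i * cnj (z t k)) = of_real lam * \<phi> i * cnj (\<phi> k)"
    and i: "i < n" and k: "k < n" and t: "t < m"
  shows "z t i * \<phi> k = z t k * \<phi> i"
proof -
  define D where "D t = z t i * \<phi> k - z t k * \<phi> i" for t
  have e: "D t * cnj (D t) = z t i * cnj (z t i) * (\<phi> k * cnj (\<phi> k))
     - z t i * cnj (z t k) * (\<phi> k * cnj (\<phi> i)) - z t k * cnj (z t i) * (\<phi> i * cnj (\<phi> k))
     + z t k * cnj (z t k) * (\<phi> i * cnj (\<phi> i))" for t
    unfolding D_def by (simp add: algebra_simps)
  have "(\<Sum>t<m. D t * cnj (D t)) =
      (\<Sum>t<m. z t i * cnj (z t i)) * (\<phi> k * cnj (\<phi> k))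
     - (\<Sum>t<m. z t i * cnj (z t k)) * (\<phi> k * cnj (\<phi> i)) - (\<Sum>t<m. z t k * cnj (z t i)) * (\<phi> i * cnj (\<phi> k))
     + (\<Sum>t<m. z t k * cnj (z t k)) * (\<phi> i * cnj (\<phi> i))"
    unfolding e by (simp add: sum.distrib sum_subtractf sum_distrib_right)
  also have "\<dots> = 0" using H i k by (simp add: algebra_simps)
  finally have "(\<Sum>t<m. D t * cnj (D t)) = 0" .
  moreover have "of_real (\<Sum>t<m. (norm (D t))\<^sup>2) = (\<Sum>t<m. D t * cnj (D t))"
    by (simp only: of_real_sum complex_norm_square)
  ultimately have "of_real (\<Sum>t<m. (norm (D t))\<^sup>2) = (0::complex)" by simp
  hence "(\<Sum>t<m. (norm (D t))\<^sup>2) = 0" by (simp only: of_real_eq_0_iff)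
  hence "\<forall>t\<in>{..<m}. (norm (D t))\<^sup>2 = 0"
    by (subst (asm) sum_nonneg_eq_0_iff) auto
  with t have "D t = 0" by simp
  thus ?thesis unfolding D_def by simp
qed

lemma par_mu:
  fixes z :: "nat \<Rightarrow> nat \<Rightarrow> complex" and \<phi> :: "nat \<Rightarrow> complex"
  assumes H: "\<forall>i<n. \<forall>k<n. (\<Sum>t<m. z t i * cnj (z t k)) = of_real lam * \<phi> i * cnj (\<phi> k)"
    and t: "t < m"
  shows "\<exists>\<mu>::real. \<forall>i<n. (cmod (z t i))\<^sup>2 = \<mu> * (cmod (\<phi> i))\<^sup>2"
proof (cases "\<exists>k<n. \<phi> k \<noteq> 0")
  case True
  then obtain k where k: "k < n" "\<phi> k \<noteq> 0" by auto
  show ?thesis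
  proof (intro exI allI impI)
    fix i assume i: "i < n"
    have "z t i * \<phi> k = z t k * \<phi> i" using par_key[OF H i k(1) t] .
    hence "cmod (z t i) * cmod (\<phi> k) = cmod (z t k) * cmod (\<phi> i)"
      by (metis norm_mult)
    hence "(cmod (z t i))\<^sup>2 * (cmod (\<phi> k))\<^sup>2 = (cmod (z t k))\<^sup>2 * (cmod (\<phi> i))\<^sup>2"
      by (metis power_mult_distrib)
    thus "(cmod (z t i))\<^sup>2 = (cmod (z t k))\<^sup>2 / (cmod (\<phi> k))\<^sup>2 * (cmod (\<phi> i))\<^sup>2"
      using k by (simp add: field_simps)
  qed
next
  case False
  show ?thesis
  proof (intro exI allI impI)
    fix i assume i: "i < n"
    have "(\<Sum>t<m. z t i * cnj (z t i)) = 0" using H i False by auto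
    moreover have "of_real (\<Sum>t<m. (norm (z t i))\<^sup>2) = (\<Sum>t<m. z t i * cnj (z t i))"
      by (simp only: of_real_sum complex_norm_square)
    ultimately have "of_real (\<Sum>t<m. (norm (z t i))\<^sup>2) = (0::complex)" by simp
    hence "(\<Sum>t<m. (norm (z t i))\<^sup>2) = 0" by (simp only: of_real_eq_0_iff)
    hence "\<forall>t\<in>{..<m}. (norm (z t i))\<^sup>2 = 0"
      by (subst (asm) sum_nonneg_eq_0_iff) auto
    with t show "(cmod (z t i))\<^sup>2 = 0 * (cmod (\<phi> i))\<^sup>2" by simp
  qed
qed

lemma psd_rank1: "psd_on I (\<lambda>i j. u i * cnj (u j))"
  unfolding psd_on_def
proof (intro conjI ballI allI)
  fix v :: "_ \<Rightarrow> complex"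
  define s where "s = (\<Sum>a\<in>I. cnj (v a) * u a)"
  have "(\<Sum>a\<in>I. \<Sum>b\<in>I. cnj (v a) * (u a * cnj (u b)) * v b) = s * cnj s"
    unfolding s_def by (simp add: sum_product cnj_sum mult_ac)
  also have "\<dots> = of_real ((norm s)\<^sup>2)" by (simp only: complex_norm_square)
  finally show "0 \<le> Re (\<Sum>a\<in>I. \<Sum>b\<in>I. cnj (v a) * (u a * cnj (u b)) * v b)" by simp
qed simp

lemma proj_left:
  assumes "i < n" "n \<le> d"
  shows "mmult_on (bi_idx d) (projV n) X (i,i) b = X (i,i) b"
proof -
  have "mmult_on (bi_idx d) (projV n) X (i,i) b = (\<Sum>c\<in>bi_idx d. if c = (i,i) then X c b else 0)"
    unfolding mmult_on_def by (rule sum.cong) (auto simp: projV_def assms split: if_splits)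
  also have "\<dots> = X (i,i) b" using assms by (simp add: bi_idx_def)
  finally show ?thesis .
qed

lemma proj_right:
  assumes "k < n" "n \<le> d"
  shows "mmult_on (bi_idx d) Y (projV n) a (k,k) = Y a (k,k)"
proof -
  have "mmult_on (bi_idx d) Y (projV n) a (k,k) = (\<Sum>c\<in>bi_idx d. if c = (k,k) then Y a c else 0)"
    unfolding mmult_on_def by (rule sum.cong) (auto simp: projV_def assms split: if_splits)
  also have "\<dots> = Y a (k,k)" using assms by (simp add: bi_idx_def)
  finally show ?thesis .
qed

lemma Kmat_eq: "e < n \<Longrightarrow> Kmat n e a = (if a = (e,e) then 1 else 0)"
  by (cases a) (auto simp: Kmat_def)

lemma ZK_eq:
  assumes "e < n" "f < n" "n \<le> d"
  shows "ZK d n \<rho> e f = \<rho> (e,f) (f,e)"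
proof -
  have m1: "\<And>P (x::complex). (if P then 1 else 0) * x = (if P then x else 0)" by simp
  have m2: "\<And>P (x::complex). x * cnj (if P then 1 else 0) = (if P then x else 0)" by simp
  show ?thesis
    using assms by (simp add: ZK_def Kmat_eq m1 m2 bi_idx_def ptrans_def)
qed

theorem mainTheorem9:
  fixes d n :: nat and \<phi> :: "nat \<Rightarrow> complex"
    and \<rho> :: "nat \<times> nat \<Rightarrow> nat \<times> nat \<Rightarrow> complex"
  assumes "n \<le> d"
    and "\<rho> \<in> F_phi d n \<phi>"
    and "separable d \<rho>"
  shows "ZK d n \<rho> \<in> R1 n (Mplus_x n (\<lambda>i. (cmod (\<phi> i))\<^sup>2))"
proof -
  note nd = assms(1)
  obtain m :: nat and v w :: "nat \<Rightarrow> nat \<Rightarrow> complex" where sep: "\<forall>i<d. \<forall>j<d. \<forall>k<d. \<forall>l<d.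
          \<rho> (i,j) (k,l) = (\<Sum>t<m. v t i * cnj (v t k) * w t j * cnj (w t l))"
    using assms(3) unfolding separable_def by blast
  obtain lam :: real where F: "\<forall>a\<in>bi_idx d. \<forall>b\<in>bi_idx d.
        mmult_on (bi_idx d) (mmult_on (bi_idx d) (projV n) \<rho>) (projV n) a b
          = of_real lam * phi_vec n \<phi> a * cnj (phi_vec n \<phi> b)"
    using assms(2) unfolding F_phi_def by blast
  define z where "z t i = v t i * w t i" for t i
  define u where "u t i = v t i * cnj (w t i)" for t i
  have H: "\<forall>i<n. \<forall>k<n. (\<Sum>t<m. z t i * cnj (z t k)) = of_real lam * \<phi> i * cnj (\<phi> k)"
  proof (intro allI impI)
    fix i k assume i: "i < n" and k: "k < n"
    have "(i,i) \<in> bi_idx d" "(k,k) \<in> bi_idx d" using i k nd by (auto simp: bi_idx_def)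
    with F have "mmult_on (bi_idx d) (mmult_on (bi_idx d) (projV n) \<rho>) (projV n) (i,i) (k,k)
          = of_real lam * phi_vec n \<phi> (i,i) * cnj (phi_vec n \<phi> (k,k))" by blast
    hence "\<rho> (i,i) (k,k) = of_real lam * \<phi> i * cnj (\<phi> k)"
      using i k nd by (simp add: proj_left proj_right phi_vec_def)
    moreover have "\<rho> (i,i) (k,k) = (\<Sum>t<m. v t i * cnj (v t k) * w t i * cnj (w t k))"
      using sep[rule_format, of i i k k] i k nd by linarith
    moreover have "\<dots> = (\<Sum>t<m. z t i * cnj (z t k))"
      unfolding z_def by (intro sum.cong refl) (simp add: algebra_simps)
    ultimately show "(\<Sum>t<m. z t i * cnj (z t k)) = of_real lam * \<phi> i * cnj (\<phi> k)" by simp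
  qed
  have ZKu: "ZK d n \<rho> e f = (\<Sum>t<m. u t e * cnj (u t f))" if "e < n" "f < n" for e f
  proof -
    have "ZK d n \<rho> e f = \<rho> (e,f) (f,e)" using that nd by (simp add: ZK_eq)
    also have "\<dots> = (\<Sum>t<m. v t e * cnj (v t f) * w t f * cnj (w t e))"
      using sep[rule_format, of e f f e] that nd by linarith
    also have "\<dots> = (\<Sum>t<m. u t e * cnj (u t f))"
      unfolding u_def by (intro sum.cong refl) (simp add: algebra_simps)
    finally show ?thesis .
  qed
  define C where "C = Mplus_x n (\<lambda>i. (cmod (\<phi> i))\<^sup>2)"
  define nz where "nz t \<longleftrightarrow> (\<exists>i<n. u t i \<noteq> 0)" for t
  define uu where "uu t = (\<lambda>i j. u t i * cnj (u t j))" for t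
  have good: "uu t \<in> C \<and> rank1 n (uu t)" if "t < m" "nz t" for t
  proof
    obtain \<mu> :: real where mu: "\<forall>i<n. (cmod (z t i))\<^sup>2 = \<mu> * (cmod (\<phi> i))\<^sup>2"
      using par_mu[OF H \<open>t < m\<close>] by blast
    have "uu t i i = of_real (\<mu> * (cmod (\<phi> i))\<^sup>2)" if "i < n" for i
    proof -
      have "uu t i i = of_real ((cmod (u t i))\<^sup>2)" unfolding uu_def by (simp only: complex_norm_square)
      also have "cmod (u t i) = cmod (z t i)" unfolding u_def z_def by (simp add: norm_mult)
      finally show ?thesis using mu that by simp
    qed
    thus "uu t \<in> C" unfolding C_def Mplus_x_def uu_def using psd_rank1 by blast
    show "rank1 n (uu t)" unfolding rank1_def uu_def using \<open>nz t\<close> nz_def by blast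
  qed
  show ?thesis
  proof (cases "\<exists>t0<m. nz t0")
    case True
    then obtain t0 where t0: "t0 < m" "nz t0" by blast
    define c where "c t = (if nz t then 1 else 0::real)" for t
    define Y where "Y t = (if nz t then uu t else uu t0)" for t
    show ?thesis unfolding R1_def C_def[symmetric]
    proof (intro CollectI exI conjI allI impI)
      fix t assume "t < m"
      show "0 \<le> c t" unfolding c_def by simp
      show "Y t \<in> C" "rank1 n (Y t)" unfolding Y_def using good t0 \<open>t < m\<close> by auto
    next
      fix i j assume i: "i < n" and j: "j < n"
      have "of_real (c t) * Y t i j = u t i * cnj (u t j)" for t
        using i j by (auto simp: c_def Y_def uu_def nz_def)
      thus "ZK d n \<rho> i j = (\<Sum>t<m. of_real (c t) * Y t i j)" using ZKu i j by simp
    qed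
  next
    case False
    have ZK0: "ZK d n \<rho> i j = 0" if i: "i < n" and j: "j < n" for i j
    proof -
      have z0: "u t i * cnj (u t j) = 0" if "t < m" for t using False that i nz_def by auto
      have "ZK d n \<rho> i j = (\<Sum>t<m. u t i * cnj (u t j))" using ZKu i j by simp
      also have "\<dots> = 0" by (rule sum.neutral) (use z0 in auto)
      finally show ?thesis .
    qed
    show ?thesis unfolding R1_def using ZK0
      by (intro CollectI exI[of _ 0] exI[of _ "\<lambda>_. 0"] exI[of _ "\<lambda>_ _ _. 0"]) auto
  qed
qed

end
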